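(* Assume $1-4M_0>0$ and set $\Xi:=1-4M_0$, $\lambda_1:=\frac{-1+\sqrt{\Xi}}{2}$, $\lambda_2:=\frac{-1-\sqrt{\Xi}}{2}$. For $x\in\Omega_0$ put $$P(x):=\frac{1}{\sqrt\Xi}\big(\lambda_1\partial_x u_0(x)-M_0+2\rho_0(x)\big),\qquad Q(x):=\frac{1}{\sqrt\Xi}\big(M_0-2\rho_0(x)-\lambda_2\partial_x u_0(x)\big),$$ and for $t\ge 0$, $x\in\Omega_0$, $$D(t,x):=\frac{2\rho_0(x)}{M_0}+\frac{P(x)}{\lambda_1}e^{\lambda_1 t}+\frac{Q(x)}{\lambda_2}e^{\lambda_2 t}$$ (this is the expression of $\partial_x\eta(t,x)$ for a classical solution of the Lagrangian system, as long as it exists). Then there exist $t>0$ and $x\in\Omega_0$ with $D(t,x)\le 0$ if and only if there exists $x\in\Omega_0$ such that $$\partial_x u_0(x)<0,\qquad M_0-2\rho_0(x)<\lambda_1\partial_x u_0(x),$$ and $$2\rho_0(x)\le\big(\lambda_1\partial_x u_0(x)-M_0+2\rho_0(x)\big)^{-\lambda_2/\sqrt\Xi}\big(\lambda_2\partial_x u_0(x)-M_0+2\rho_0(x)\big)^{\lambda_1/\sqrt\Xi}.$$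
   Context: $\Omega_0=(a_0,b_0)$ is a bounded open interval, $\rho_0\in H^2(\Omega_0)$ with $\rho_0>0$ on $\Omega_0$, $u_0\in H^3(\Omega_0)$ (both continuous up to the boundary), and $M_0:=\int_{\Omega_0}\rho_0(x)\,dx>0$. Note $D(0,x)=1$ for all $x$. *)

theory Defs
  imports "HOL-Analysis.Analysis"
begin

definition Xi :: "real \<Rightarrow> real" where
  "Xi M0 = 1 - 4 * M0"

definition lam1 :: "real \<Rightarrow> real" where
  "lam1 M0 = (-1 + sqrt (Xi M0)) / 2"

definition lam2 :: "real \<Rightarrow> real" where
  "lam2 M0 = (-1 - sqrt (Xi M0)) / 2"

definition Pcoef :: "real \<Rightarrow> real \<Rightarrow> real \<Rightarrow> real" where
  "Pcoef M0 r du = (1 / sqrt (Xi M0)) * (lam1 M0 * du - M0 + 2 * r)"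

definition Qcoef :: "real \<Rightarrow> real \<Rightarrow> real \<Rightarrow> real" where
  "Qcoef M0 r du = (1 / sqrt (Xi M0)) * (M0 - 2 * r - lam2 M0 * du)"

definition Dfun :: "real \<Rightarrow> (real \<Rightarrow> real) \<Rightarrow> (real \<Rightarrow> real) \<Rightarrow> real \<Rightarrow> real \<Rightarrow> real" where
  "Dfun M0 rho0 u0 t x =
     2 * rho0 x / M0
     + Pcoef M0 (rho0 x) (deriv u0 x) / lam1 M0 * exp (lam1 M0 * t)
     + Qcoef M0 (rho0 x) (deriv u0 x) / lam2 M0 * exp (lam2 M0 * t)"

end

theory Submission
  imports Defs
begin

lemma young_w:
  fixes a b w :: real
  assumes "0 \<le> w" "w \<le> 1" "a > 0" "b > 0"
  shows "a powr (1-w) * b powr w \<le> (1-w)*a + w*b"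
  using Youngs_inequality_0[of "1-w" w a b] assms by simp

lemma core:
  fixes \<alpha> \<beta> r d :: real
  assumes a0: "0<\<alpha>" and ab: "\<alpha><\<beta>" and r0: "r>0"
  defines "s \<equiv> \<beta> - \<alpha>"
  defines "A \<equiv> 2*r - \<alpha>*\<beta> - \<alpha>*d"
  defines "B \<equiv> 2*r - \<alpha>*\<beta> - \<beta>*d"
  defines "E \<equiv> (\<lambda>t. 2*r - (\<beta>*A*exp(-\<alpha>*t) - \<alpha>*B*exp(-\<beta>*t))/s)"
  shows "(\<exists>t>0. E t \<le> 0) \<longleftrightarrow> (d<0 \<and> 0 < A \<and> 2*r \<le> A powr (\<beta>/s) * B powr (-\<alpha>/s))"
proof
  assume "\<exists>t>0. E t \<le> 0"
  then obtain t where t0: "t>0" and Et: "E t \<le> 0" by blast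
  define X where "X = exp(-\<alpha>*t)"
  define Y where "Y = exp(-\<beta>*t)"
  have s0: "s > 0" using ab s_def by simp
  have b0: "\<beta> > 0" using a0 ab by simp
  have X0: "X > 0" "Y > 0" unfolding X_def Y_def by auto
  have YX: "Y < X" unfolding X_def Y_def using t0 ab by simp
  have EE: "E t = 2*r - (\<beta>*A*X - \<alpha>*B*Y)/s" unfolding E_def X_def Y_def by simp
  have Gpos: "\<beta>*X - \<alpha>*Y > 0"
    using X0 YX a0 ab by (smt (verit) mult_strict_mono)
  have "Y powr (\<alpha>/\<beta>) = X"
    unfolding X_def Y_def using b0 by (simp add: powr_def)
  hence "X \<le> (1-\<alpha>/\<beta>)*1 + (\<alpha>/\<beta>)*Y"
    using young_w[of "\<alpha>/\<beta>" 1 Y] a0 ab b0 X0 by simp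
  hence "\<beta>*X \<le> \<beta>*((1-\<alpha>/\<beta>)*1 + (\<alpha>/\<beta>)*Y)"
    using b0 by simp
  also have "\<dots> = \<beta> - \<alpha> + \<alpha>*Y" using b0 by (simp add: field_simps)
  finally have Gle: "\<beta>*X - \<alpha>*Y \<le> s" unfolding s_def by simp
  have Eexp: "E t = 2*r*(1 - (\<beta>*X - \<alpha>*Y)/s) + \<alpha>*\<beta>*((\<beta>*X - \<alpha>*Y)/s) + \<alpha>*\<beta>*d*(X-Y)/s"
    unfolding EE A_def B_def using s0 by (simp add: field_simps)
  have d0: "d < 0"
  proof (rule ccontr)
    assume "\<not> d < 0"
    hence "d \<ge> 0" by simp
    have "2*r*(1 - (\<beta>*X - \<alpha>*Y)/s) \<ge> 0" using Gle s0 r0 by simp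
    moreover have "\<alpha>*\<beta>*((\<beta>*X - \<alpha>*Y)/s) > 0" using Gpos s0 a0 b0 by simp
    moreover have "\<alpha>*\<beta>*d*(X-Y)/s \<ge> 0" using \<open>d\<ge>0\<close> YX s0 a0 b0 by simp
    ultimately have "E t > 0" unfolding Eexp by linarith
    thus False using Et by simp
  qed
  have BA: "B - A = -(s*d)" unfolding A_def B_def s_def by (simp add: algebra_simps)
  have AB: "A < B" using BA d0 s0 by (smt (verit) mult_pos_neg[of s d])
  have A0: "A > 0"
  proof (rule ccontr)
    assume "\<not> A > 0"
    hence "A \<le> 0" by simp
    have "\<beta>*A*X - \<alpha>*B*Y < 0"
    proof (cases "B > 0")
      case True
      have "\<beta>*A*X \<le> 0" using \<open>A\<le>0\<close> b0 X0 by (simp add: mult_nonpos_nonneg mult_le_0_iff)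
      moreover have "\<alpha>*B*Y > 0" using True a0 X0 by simp
      ultimately show ?thesis by linarith
    next
      case False
      have "\<beta>*A*X < \<beta>*B*X" using AB b0 X0 by simp
      moreover have "\<beta>*B*X - \<alpha>*B*Y = B*(\<beta>*X - \<alpha>*Y)" by (simp add: algebra_simps)
      moreover have "B*(\<beta>*X - \<alpha>*Y) \<le> 0" using False Gpos by (simp add: mult_nonpos_nonneg)
      ultimately show ?thesis by linarith
    qed
    hence "E t > 0" unfolding EE using s0 r0 by (smt (verit) divide_neg_pos) 
    thus False using Et by simp
  qed
  have B0: "B > 0" using A0 AB by simp
  define K where "K = A powr (\<beta>/s) * B powr (-\<alpha>/s)"
  have K0: "K > 0" unfolding K_def using A0 B0 by simp
  have "K powr (1 - \<alpha>/\<beta>) * (B*Y) powr (\<alpha>/\<beta>) \<le> (1 - \<alpha>/\<beta>)*K + (\<alpha>/\<beta>)*(B*Y)"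
    using young_w[of "\<alpha>/\<beta>" K "B*Y"] a0 ab b0 K0 B0 X0 by simp
  moreover have "K powr (1 - \<alpha>/\<beta>) * (B*Y) powr (\<alpha>/\<beta>) = A*X"
  proof -
    have e1: "1 - \<alpha>/\<beta> = s/\<beta>" using b0 unfolding s_def by (simp add: field_simps)
    have "K powr (s/\<beta>) = A powr (\<beta>/s*(s/\<beta>)) * B powr (-\<alpha>/s*(s/\<beta>))"
      unfolding K_def using A0 B0 by (simp add: powr_mult powr_powr)
    also have "\<dots> = A * B powr (-\<alpha>/\<beta>)" using s0 b0 A0 by simp
    finally have k: "K powr (s/\<beta>) = A * B powr (-\<alpha>/\<beta>)" .
    have "Y powr (\<alpha>/\<beta>) = X"
      unfolding X_def Y_def using b0 by (simp add: powr_def)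
    hence y: "(B*Y) powr (\<alpha>/\<beta>) = B powr (\<alpha>/\<beta>) * X" using B0 X0 by (simp add: powr_mult)
    have "B powr (-\<alpha>/\<beta>) * B powr (\<alpha>/\<beta>) = 1" using B0
      by (simp add: powr_add[symmetric])
    thus ?thesis unfolding e1 k y by (metis mult.assoc mult.commute mult.left_commute mult_1)
  qed
  ultimately have "A*X \<le> (1 - \<alpha>/\<beta>)*K + (\<alpha>/\<beta>)*(B*Y)" by simp
  hence "\<beta>*(A*X) \<le> \<beta>*((1 - \<alpha>/\<beta>)*K + (\<alpha>/\<beta>)*(B*Y))" using b0 by simp
  also have "\<beta>*((1 - \<alpha>/\<beta>)*K + (\<alpha>/\<beta>)*(B*Y)) = (\<beta>-\<alpha>)*K + \<alpha>*(B*Y)"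
    using b0 by (simp add: field_simps)
  finally have "\<beta>*A*X - \<alpha>*B*Y \<le> s*K" unfolding s_def by (simp add: algebra_simps)
  hence "E t \<ge> 2*r - K" unfolding EE using s0 by (simp add: field_simps)
  hence "2*r \<le> K" using Et by simp
  thus "d<0 \<and> 0 < A \<and> 2*r \<le> A powr (\<beta>/s) * B powr (-\<alpha>/s)" using d0 A0 K_def by simp
next
  assume H: "d<0 \<and> 0 < A \<and> 2*r \<le> A powr (\<beta>/s) * B powr (-\<alpha>/s)"
  have s0: "s > 0" using ab s_def by simp
  have b0: "\<beta> > 0" using a0 ab by simp
  have A0: "A > 0" using H by simp
  have BA: "B - A = -(s*d)" unfolding A_def B_def s_def by (simp add: algebra_simps)
  have AB: "A < B" using BA H s0 by (smt (verit) mult_pos_neg[of s d])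
  have B0: "B > 0" using A0 AB by simp
  define K where "K = A powr (\<beta>/s) * B powr (-\<alpha>/s)"
  define t where "t = ln (B/A) / s"
  have t0: "t > 0" unfolding t_def using AB A0 s0 by simp
  have X: "exp(-\<alpha>*t) = (B/A) powr (-\<alpha>/s)"
    unfolding t_def using A0 B0 s0 by (simp add: powr_def)
  have Y: "exp(-\<beta>*t) = (B/A) powr (-\<beta>/s)"
    unfolding t_def using A0 B0 s0 by (simp add: powr_def)
  have AX: "A * exp(-\<alpha>*t) = K"
  proof -
    have "A * (B/A) powr (-\<alpha>/s) = A powr 1 * A powr (\<alpha>/s) * B powr (-\<alpha>/s)"
      using A0 B0 by (simp add: powr_divide powr_minus_divide divide_simps)
    also have "\<dots> = A powr (1 + \<alpha>/s) * B powr (-\<alpha>/s)" using A0 by (simp add: powr_add)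
    also have "1 + \<alpha>/s = \<beta>/s" using s0 unfolding s_def by (simp add: field_simps)
    finally show ?thesis unfolding X K_def by simp
  qed
  have BY: "B * exp(-\<beta>*t) = K"
  proof -
    have "B * (B/A) powr (-\<beta>/s) = B powr 1 * B powr (-\<beta>/s) * A powr (\<beta>/s)"
      using A0 B0 by (simp add: powr_divide powr_minus_divide divide_simps)
    also have "\<dots> = B powr (1 - \<beta>/s) * A powr (\<beta>/s)" using B0 powr_add[of B 1 "-\<beta>/s"] by simp
    also have "1 - \<beta>/s = -\<alpha>/s" using s0 unfolding s_def by (simp add: field_simps)
    finally show ?thesis unfolding Y K_def by simp
  qed
  have "E t = 2*r - (\<beta>*K - \<alpha>*K)/s" unfolding E_def
    using AX BY by (simp add: mult.assoc)
  also have "\<dots> = 2*r - K" using s0 unfolding s_def by (simp add: field_simps)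
  finally have "E t \<le> 0" using H K_def by simp
  thus "\<exists>t>0. E t \<le> 0" using t0 by blast
qed

lemma pointwise:
  fixes M r d :: real
  assumes M0: "M > 0" and Xp: "1 - 4*M > 0" and r0: "r > 0"
  shows "(\<exists>t>0. 2 * r / M
     + Pcoef M r d / lam1 M * exp (lam1 M * t)
     + Qcoef M r d / lam2 M * exp (lam2 M * t) \<le> 0) \<longleftrightarrow>
     (d < 0 \<and> M - 2 * r < lam1 M * d \<and>
      2 * r \<le> (lam1 M * d - M + 2 * r) powr (- lam2 M / sqrt (Xi M))
              * (lam2 M * d - M + 2 * r) powr (lam1 M / sqrt (Xi M)))"
proof -
  define s where "s = sqrt (Xi M)"
  define \<alpha> where "\<alpha> = (1 - s)/2"
  define \<beta> where "\<beta> = (1 + s)/2"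
  have s0: "s > 0" unfolding s_def Xi_def using Xp by simp
  have s2: "s^2 = 1 - 4*M" unfolding s_def Xi_def using Xp by simp
  have s1: "s < 1" using s2 s0 M0
    by (smt (verit) one_le_power power_le_one)
  have a0: "0 < \<alpha>" unfolding \<alpha>_def using s1 by simp
  have ab: "\<alpha> < \<beta>" unfolding \<alpha>_def \<beta>_def using s0 by simp
  have sd: "\<beta> - \<alpha> = s" unfolding \<alpha>_def \<beta>_def by (simp add: field_simps)
  have Mab: "M = \<alpha>*\<beta>" unfolding \<alpha>_def \<beta>_def using s2 by (simp add: field_simps power2_eq_square)
  have l1: "lam1 M = -\<alpha>" unfolding lam1_def \<alpha>_def s_def by (simp add: field_simps)
  have l2: "lam2 M = -\<beta>" unfolding lam2_def \<beta>_def s_def by (simp add: field_simps)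
  have b0: "\<beta> > 0" using a0 ab by simp
  define A where "A = 2*r - \<alpha>*\<beta> - \<alpha>*d"
  define B where "B = 2*r - \<alpha>*\<beta> - \<beta>*d"
  define E where "E = (\<lambda>t. 2*r - (\<beta>*A*exp(-\<alpha>*t) - \<alpha>*B*exp(-\<beta>*t))/(\<beta>-\<alpha>))"
  have C: "(\<exists>t>0. E t \<le> 0) \<longleftrightarrow> (d<0 \<and> 0 < A \<and> 2*r \<le> A powr (\<beta>/(\<beta>-\<alpha>)) * B powr (-\<alpha>/(\<beta>-\<alpha>)))"
    using core[OF a0 ab r0, of d] unfolding A_def B_def E_def by simp
  have P: "Pcoef M r d = A / s" unfolding Pcoef_def A_def s_def[symmetric] l1 by (simp add: Mab)
  have Q: "Qcoef M r d = - B / s" unfolding Qcoef_def B_def s_def[symmetric] l2 using s0 by (simp add: Mab field_simps)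
  have DE: "2 * r / M + Pcoef M r d / lam1 M * exp (lam1 M * t) + Qcoef M r d / lam2 M * exp (lam2 M * t)
      = E t / M" for t
    unfolding P Q l1 l2 E_def sd using a0 b0 s0 by (simp add: Mab field_simps)
  have D0: "(2 * r / M + Pcoef M r d / lam1 M * exp (lam1 M * t) + Qcoef M r d / lam2 M * exp (lam2 M * t) \<le> 0)
      \<longleftrightarrow> E t \<le> 0" for t
    unfolding DE using M0 by (simp add: divide_le_0_iff)
  have R1: "(M - 2 * r < lam1 M * d) \<longleftrightarrow> 0 < A" unfolding A_def l1 by (auto simp: Mab)
  have R2: "(lam1 M * d - M + 2 * r) = A" unfolding A_def l1 by (simp add: Mab)
  have R3: "(lam2 M * d - M + 2 * r) = B" unfolding B_def l2 by (simp add: Mab)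
  have R4: "- lam2 M / sqrt (Xi M) = \<beta>/(\<beta>-\<alpha>)" unfolding l2 sd s_def by simp
  have R5: "lam1 M / sqrt (Xi M) = -\<alpha>/(\<beta>-\<alpha>)" unfolding l1 sd s_def by simp
  show ?thesis unfolding D0 R1 R2 R3 R4 R5 C ..
qed

theorem proposition3p1:
  fixes a0 b0 M0 :: real and rho0 u0 :: "real \<Rightarrow> real"
  assumes ab: "a0 < b0"
    and rho_cont: "continuous_on {a0..b0} rho0"
    and rho_pos: "\<forall>x\<in>{a0<..<b0}. rho0 x > 0"
    and u_cont: "continuous_on {a0..b0} u0"
    and u_diff: "\<forall>x\<in>{a0<..<b0}. u0 differentiable (at x)"
    and du_cont: "continuous_on {a0<..<b0} (deriv u0)"
    and M0_def: "M0 = integral {a0..b0} rho0"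
    and M0_pos: "M0 > 0"
    and Xi_pos: "1 - 4 * M0 > 0"
  shows "(\<exists>t>0. \<exists>x\<in>{a0<..<b0}. Dfun M0 rho0 u0 t x \<le> 0) \<longleftrightarrow>
         (\<exists>x\<in>{a0<..<b0}.
            deriv u0 x < 0 \<and>
            M0 - 2 * rho0 x < lam1 M0 * deriv u0 x \<and>
            2 * rho0 x \<le>
              (lam1 M0 * deriv u0 x - M0 + 2 * rho0 x) powr (- lam2 M0 / sqrt (Xi M0))
              * (lam2 M0 * deriv u0 x - M0 + 2 * rho0 x) powr (lam1 M0 / sqrt (Xi M0)))"
proof -
  show ?thesis
    unfolding Dfun_def
    using pointwise[OF M0_pos Xi_pos] rho_pos by blast
qed

end
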